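(* Let $R$ be a finitely stable domain that does not have finite character, let $x\in R$ be nonzero and let $\{I_\alpha\}$ be an infinite family of pairwise comaximal finitely generated ideals of $R$ each containing $x$. Set $E_\alpha=(I_\alpha:I_\alpha)$ and $E=\sum_\alpha E_\alpha$. Then $E$ is a fractional overring of $R$, and $\{I_\alpha E\}$ is an infinite family of pairwise comaximal proper invertible ideals of $E$, each containing $x$.
   Context: Let $R$ be an integral domain with quotient field $K\neq R$. For a nonzero ideal $I$, $(I:I)=\{y\in K: yI\subseteq I\}$. An overring of $R$ is a domain $D$ with $R\subseteq D\subseteq K$; it is fractional if $dD\subseteq R$ for some nonzero $d\in R$. A nonzero ideal $I$ is stable if it is invertible as an ideal of $(I:I)$; $R$ is finitely stable if every nonzero finitely generated ideal is stable. $R$ has finite character if every nonzero element of $R$ lies in only finitely many maximal ideals. Ideals $A,B$ of a ring $S$ are comaximal if $A+B=S$. *)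

theory Defs
  imports Main
begin

text \<open>Conventions: the quotient field K of R is the ambient field type 'k;
  R, its overrings and (fractional) ideals are subsets of 'k.\<close>

definition subring :: "'k::field set \<Rightarrow> bool" where
  "subring S \<longleftrightarrow> 0 \<in> S \<and> 1 \<in> S \<and> (\<forall>a\<in>S. \<forall>b\<in>S. a + b \<in> S \<and> a * b \<in> S \<and> - a \<in> S)"

definition has_quotient_field :: "'k::field set \<Rightarrow> bool" where
  "has_quotient_field R \<longleftrightarrow> subring R \<and>
     (\<forall>z::'k. \<exists>a\<in>R. \<exists>b\<in>R. b \<noteq> 0 \<and> z = a / b)"

definition is_ideal :: "'k::field set \<Rightarrow> 'k set \<Rightarrow> bool" where
  "is_ideal S I \<longleftrightarrow> I \<subseteq> S \<and> 0 \<in> I \<and> (\<forall>a\<in>I. \<forall>b\<in>I. a + b \<in> I) \<and>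
     (\<forall>s\<in>S. \<forall>a\<in>I. s * a \<in> I)"

definition fset_mult :: "'k::field set \<Rightarrow> 'k set \<Rightarrow> 'k set" where
  "fset_mult A B = {y. \<exists>(n::nat) f g. (\<forall>i<n. f i \<in> A \<and> g i \<in> B) \<and> y = (\<Sum>i<n. f i * g i)}"

definition fin_gen :: "'k::field set \<Rightarrow> 'k set \<Rightarrow> bool" where
  "fin_gen S I \<longleftrightarrow> (\<exists>G. finite G \<and> G \<subseteq> S \<and> I = fset_mult S G)"

definition colon :: "'k::field set \<Rightarrow> 'k set \<Rightarrow> 'k set" where
  "colon I J = {y. \<forall>j\<in>J. y * j \<in> I}"

definition invertible_ideal :: "'k::field set \<Rightarrow> 'k set \<Rightarrow> bool" where
  "invertible_ideal S J \<longleftrightarrow> is_ideal S J \<and> fset_mult J (colon S J) = S"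

definition stable_ideal :: "'k::field set \<Rightarrow> 'k set \<Rightarrow> bool" where
  "stable_ideal R I \<longleftrightarrow> is_ideal R I \<and> I \<noteq> {0} \<and> invertible_ideal (colon I I) I"

definition finitely_stable :: "'k::field set \<Rightarrow> bool" where
  "finitely_stable R \<longleftrightarrow> (\<forall>I. is_ideal R I \<and> I \<noteq> {0} \<and> fin_gen R I \<longrightarrow> stable_ideal R I)"

definition maximal_ideal :: "'k::field set \<Rightarrow> 'k set \<Rightarrow> bool" where
  "maximal_ideal R M \<longleftrightarrow> is_ideal R M \<and> M \<noteq> R \<and>
     (\<forall>J. is_ideal R J \<and> M \<subseteq> J \<and> J \<noteq> R \<longrightarrow> J = M)"

definition finite_character :: "'k::field set \<Rightarrow> bool" where
  "finite_character R \<longleftrightarrow> (\<forall>r\<in>R. r \<noteq> 0 \<longrightarrow> finite {M. maximal_ideal R M \<and> r \<in> M})"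

definition comaximal :: "'k::field set \<Rightarrow> 'k set \<Rightarrow> 'k set \<Rightarrow> bool" where
  "comaximal S A B \<longleftrightarrow> {a + b |a b. a \<in> A \<and> b \<in> B} = S"

definition overring :: "'k::field set \<Rightarrow> 'k set \<Rightarrow> bool" where
  "overring R D \<longleftrightarrow> subring D \<and> R \<subseteq> D"

definition fractional_overring :: "'k::field set \<Rightarrow> 'k set \<Rightarrow> bool" where
  "fractional_overring R D \<longleftrightarrow> overring R D \<and> (\<exists>d\<in>R. d \<noteq> 0 \<and> (\<forall>y\<in>D. d * y \<in> R))"

definition family_sum :: "'a set \<Rightarrow> ('a \<Rightarrow> 'k::field set) \<Rightarrow> 'k set" where
  "family_sum A E = {y. \<exists>F e. finite F \<and> F \<subseteq> A \<and> (\<forall>a\<in>F. e a \<in> E a) \<and> y = (\<Sum>a\<in>F. e a)}"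

end

theory Submission imports Defs begin

lemma fm_induct:
  assumes "(0::'k::field) \<in> T" "\<And>u v. u\<in>T \<Longrightarrow> v\<in>T \<Longrightarrow> u+v\<in>T" "\<And>a b. a\<in>A \<Longrightarrow> b\<in>B \<Longrightarrow> a*b\<in>T"
  shows "fset_mult A B \<subseteq> T"
proof
  fix y assume "y \<in> fset_mult A B"
  then obtain n f g where h: "\<forall>i<(n::nat). f i \<in> A \<and> g i \<in> B" "y = (\<Sum>i<n. f i * g i)"
    unfolding fset_mult_def by blast
  have "(\<forall>i<n. f i \<in> A \<and> g i \<in> B) \<longrightarrow> (\<Sum>i<n. f i * g i) \<in> T"
    by (induction n) (auto simp: assms)
  with h show "y \<in> T" by simp
qed

lemma fs_induct:
  assumes "(0::'k::field) \<in> T" "\<And>u v. u\<in>T \<Longrightarrow> v\<in>T \<Longrightarrow> u+v\<in>T" "\<And>a. a\<in>A \<Longrightarrow> E a \<subseteq> T"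
  shows "family_sum A E \<subseteq> T"
proof
  fix y assume "y \<in> family_sum A E"
  then obtain F e where h: "finite F" "F \<subseteq> A" "\<forall>a\<in>F. e a \<in> E a" "y = (\<Sum>a\<in>F. e a)"
    unfolding family_sum_def by blast
  have "F \<subseteq> A \<longrightarrow> (\<forall>a\<in>F. e a \<in> E a) \<longrightarrow> (\<Sum>a\<in>F. e a) \<in> T"
    using h(1) by (induction F rule: finite_induct) (auto simp: assms(1,2) dest!: assms(3))
  with h show "y \<in> T" by simp
qed

lemma fm_prod: "a \<in> A \<Longrightarrow> b \<in> B \<Longrightarrow> (a::'k::field) * b \<in> fset_mult A B"
  unfolding fset_mult_def
  by (rule CollectI, rule exI[of _ 1], rule exI[of _ "\<lambda>_. a"], rule exI[of _ "\<lambda>_. b"]) simp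

lemma fm_zero: "(0::'k::field) \<in> fset_mult A B"
  unfolding fset_mult_def by (rule CollectI, rule exI[of _ 0]) simp

lemma fm_add1:
  assumes "y \<in> fset_mult A B" "a \<in> A" "b \<in> B"
  shows "y + (a::'k::field) * b \<in> fset_mult A B"
proof -
  obtain n f g where h: "\<forall>i<(n::nat). f i \<in> A \<and> g i \<in> B" "y = (\<Sum>i<n. f i * g i)"
    using assms(1) unfolding fset_mult_def by blast
  define f' where "f' = f(n:=a)"
  define g' where "g' = g(n:=b)"
  have c: "(\<Sum>i<n. f' i * g' i) = (\<Sum>i<n. f i * g i)"
    by (rule sum.cong) (auto simp: f'_def g'_def)
  have "(\<Sum>i<Suc n. f' i * g' i) = y + a * b"
    unfolding sum.lessThan_Suc c h(2) by (simp add: f'_def g'_def)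
  moreover have "\<forall>i<Suc n. f' i \<in> A \<and> g' i \<in> B" using h(1) assms by (auto simp: f'_def g'_def less_Suc_eq)
  ultimately have "\<exists>m F G. (\<forall>i<(m::nat). F i \<in> A \<and> G i \<in> B) \<and> y + a * b = (\<Sum>i<m. F i * G i)"
    by metis
  then show ?thesis unfolding fset_mult_def by simp
qed

lemma fm_add:
  assumes "y \<in> fset_mult A B" "z \<in> fset_mult A B"
  shows "y + (z::'k::field) \<in> fset_mult A B"
proof -
  have "fset_mult A B \<subseteq> {z. \<forall>y\<in>fset_mult A B. y + z \<in> fset_mult A B}"
  proof (rule fm_induct)
    show "0 \<in> {z. \<forall>y\<in>fset_mult A B. y + z \<in> fset_mult A B}" by simp
    show "u + v \<in> {z. \<forall>y\<in>fset_mult A B. y + z \<in> fset_mult A B}"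
      if "u \<in> {z. \<forall>y\<in>fset_mult A B. y + z \<in> fset_mult A B}" "v \<in> {z. \<forall>y\<in>fset_mult A B. y + z \<in> fset_mult A B}" for u v
      using that by (simp add: add.assoc[symmetric])
    show "a * b \<in> {z. \<forall>y\<in>fset_mult A B. y + z \<in> fset_mult A B}" if "a \<in> A" "b \<in> B" for a b
      using that fm_add1 by blast
  qed
  with assms show ?thesis by blast
qed

lemma fs_zero: "(0::'k::field) \<in> family_sum A E"
  unfolding family_sum_def by (rule CollectI, rule exI[of _ "{}"]) simp

lemma fs_mem: "a \<in> A \<Longrightarrow> u \<in> E a \<Longrightarrow> (u::'k::field) \<in> family_sum A E"
  unfolding family_sum_def
  by (rule CollectI, rule exI[of _ "{a}"], rule exI[of _ "\<lambda>_. u"]) simp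

lemma fs_intro: "finite F \<Longrightarrow> F \<subseteq> A \<Longrightarrow> \<forall>a\<in>F. e a \<in> E a \<Longrightarrow> y = sum e F \<Longrightarrow> (y::'k::field) \<in> family_sum A E"
  unfolding family_sum_def by blast

lemma fs_add1:
  assumes "y \<in> family_sum A E" "b \<in> A" "u \<in> E b"
    and E0: "\<And>a. a \<in> A \<Longrightarrow> 0 \<in> E a" and Eadd: "\<And>a p q. a \<in> A \<Longrightarrow> p \<in> E a \<Longrightarrow> q \<in> E a \<Longrightarrow> p + q \<in> E a"
  shows "y + (u::'k::field) \<in> family_sum A E"
proof -
  obtain F e where h: "finite F" "F \<subseteq> A" "\<forall>a\<in>F. e a \<in> E a" "y = (\<Sum>a\<in>F. e a)"
    using assms(1) unfolding family_sum_def by blast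
  show ?thesis
  proof (cases "b \<in> F")
    case True
    let ?e = "e(b := e b + u)"
    have "(\<Sum>a\<in>F. ?e a) = y + u"
      using h True by (simp add: sum.remove[of F b] algebra_simps)
    moreover have "\<forall>a\<in>F. ?e a \<in> E a"
    proof
      fix a assume "a \<in> F"
      show "?e a \<in> E a"
      proof (cases "a = b")
        case True then show ?thesis using h \<open>a \<in> F\<close> assms(2,3) Eadd[of b "e b" u] by auto
      qed (use h \<open>a \<in> F\<close> in auto)
    qed
    ultimately show ?thesis using h(1,2) fs_intro[of F A ?e E "y+u"] by simp
  next
    case False
    let ?e = "e(b := u)"
    have "(\<Sum>a\<in>insert b F. ?e a) = y + u"
    proof -
      have "(\<Sum>a\<in>F. ?e a) = y" using h False by (auto intro!: sum.cong)
      then show ?thesis using h False by (simp add: add.commute)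
    qed
    moreover have "\<forall>a\<in>insert b F. ?e a \<in> E a" using h(3) False assms(3) by auto
    moreover have "finite (insert b F)" "insert b F \<subseteq> A" using h assms(2) by auto
    ultimately show ?thesis using fs_intro[of "insert b F" A ?e E "y+u"] by simp
  qed
qed

lemma fs_add:
  assumes "y \<in> family_sum A E" "z \<in> family_sum A E"
    and E0: "\<And>a. a \<in> A \<Longrightarrow> 0 \<in> E a" and Eadd: "\<And>a p q. a \<in> A \<Longrightarrow> p \<in> E a \<Longrightarrow> q \<in> E a \<Longrightarrow> p + q \<in> E a"
  shows "y + (z::'k::field) \<in> family_sum A E"
proof -
  have "family_sum A E \<subseteq> {z. \<forall>y\<in>family_sum A E. y + z \<in> family_sum A E}"
  proof (rule fs_induct)
    show "0 \<in> {z. \<forall>y\<in>family_sum A E. y + z \<in> family_sum A E}" by simp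
    show "u + v \<in> {z. \<forall>y\<in>family_sum A E. y + z \<in> family_sum A E}"
      if "u \<in> {z. \<forall>y\<in>family_sum A E. y + z \<in> family_sum A E}" "v \<in> {z. \<forall>y\<in>family_sum A E. y + z \<in> family_sum A E}" for u v
      using that by (simp add: add.assoc[symmetric])
    show "E a \<subseteq> {z. \<forall>y\<in>family_sum A E. y + z \<in> family_sum A E}" if "a \<in> A" for a
      using that fs_add1[of _ A E a, OF _ _ _ E0 Eadd] by blast
  qed
  with assms show ?thesis by blast
qed



theorem mainTheorem5:
  fixes R :: "'k::field set" and x :: 'k and A :: "'a set" and I :: "'a \<Rightarrow> 'k set"
  assumes "has_quotient_field R" and "R \<noteq> UNIV"
    and "finitely_stable R" and "\<not> finite_character R"
    and "x \<in> R" and "x \<noteq> 0"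
    and "infinite A"
    and "\<And>\<alpha>. \<alpha> \<in> A \<Longrightarrow> is_ideal R (I \<alpha>) \<and> fin_gen R (I \<alpha>) \<and> I \<alpha> \<noteq> R \<and> x \<in> I \<alpha>"
    and "\<And>\<alpha> \<beta>. \<alpha> \<in> A \<Longrightarrow> \<beta> \<in> A \<Longrightarrow> \<alpha> \<noteq> \<beta> \<Longrightarrow> comaximal R (I \<alpha>) (I \<beta>)"
  shows "fractional_overring R (family_sum A (\<lambda>\<alpha>. colon (I \<alpha>) (I \<alpha>)))
    \<and> infinite ((\<lambda>\<alpha>. fset_mult (I \<alpha>) (family_sum A (\<lambda>\<alpha>. colon (I \<alpha>) (I \<alpha>)))) ` A)
    \<and> (\<forall>\<alpha>\<in>A. \<forall>\<beta>\<in>A. \<alpha> \<noteq> \<beta> \<longrightarrow>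
          comaximal (family_sum A (\<lambda>\<alpha>. colon (I \<alpha>) (I \<alpha>)))
            (fset_mult (I \<alpha>) (family_sum A (\<lambda>\<alpha>. colon (I \<alpha>) (I \<alpha>))))
            (fset_mult (I \<beta>) (family_sum A (\<lambda>\<alpha>. colon (I \<alpha>) (I \<alpha>)))))
    \<and> (\<forall>\<alpha>\<in>A. invertible_ideal (family_sum A (\<lambda>\<alpha>. colon (I \<alpha>) (I \<alpha>)))
            (fset_mult (I \<alpha>) (family_sum A (\<lambda>\<alpha>. colon (I \<alpha>) (I \<alpha>))))
          \<and> fset_mult (I \<alpha>) (family_sum A (\<lambda>\<alpha>. colon (I \<alpha>) (I \<alpha>)))
              \<noteq> family_sum A (\<lambda>\<alpha>. colon (I \<alpha>) (I \<alpha>))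
          \<and> x \<in> fset_mult (I \<alpha>) (family_sum A (\<lambda>\<alpha>. colon (I \<alpha>) (I \<alpha>))))"
proof -
  have sR: "subring R" using assms(1) unfolding has_quotient_field_def by blast
  have R0: "0 \<in> R" and R1: "1 \<in> R" using sR unfolding subring_def by auto
  have Radd: "a + b \<in> R" if "a \<in> R" "b \<in> R" for a b using sR that unfolding subring_def by auto
  have Rmul: "a * b \<in> R" if "a \<in> R" "b \<in> R" for a b using sR that unfolding subring_def by auto
  have Rneg: "- a \<in> R" if "a \<in> R" for a using sR that unfolding subring_def by auto
  have Iid: "is_ideal R (I a)" if "a \<in> A" for a using assms(8) that by blast
  have IR: "I a \<subseteq> R" if "a \<in> A" for a using Iid[OF that] unfolding is_ideal_def by blast
  have I0: "0 \<in> I a" if "a \<in> A" for a using Iid[OF that] unfolding is_ideal_def by blast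
  have Iadd: "u + v \<in> I a" if "a \<in> A" "u \<in> I a" "v \<in> I a" for a u v
    using Iid[OF that(1)] that unfolding is_ideal_def by blast
  have Imul: "r * u \<in> I a" if "a \<in> A" "r \<in> R" "u \<in> I a" for a r u
    using Iid[OF that(1)] that unfolding is_ideal_def by blast
  have Ineg: "- u \<in> I a" if "a \<in> A" "u \<in> I a" for a u
    using Imul[OF that(1) Rneg[OF R1] that(2)] by simp
  have Ix: "x \<in> I a" if "a \<in> A" for a using assms(8) that by blast
  have INR: "I a \<noteq> R" if "a \<in> A" for a using assms(8) that by blast
  have comax: "\<exists>p\<in>I a. \<exists>q\<in>I b. p + q = 1" if "a \<in> A" "b \<in> A" "a \<noteq> b" for a b
  proof -
    have "1 \<in> {p + q |p q. p \<in> I a \<and> q \<in> I b}" using assms(9)[OF that] R1 unfolding comaximal_def by simp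
    then obtain p q where "1 = p + q" "p \<in> I a" "q \<in> I b" by blast
    then show ?thesis by metis
  qed
  define Ea where "Ea = (\<lambda>a. colon (I a) (I a))"
  have Ea_mem: "e * u \<in> I a" if "e \<in> Ea a" "u \<in> I a" for e u a using that unfolding Ea_def colon_def by blast
  have RE: "R \<subseteq> Ea a" if "a \<in> A" for a
    using Imul[OF that] unfolding Ea_def colon_def by blast
  have Ea0: "0 \<in> Ea a" if "a \<in> A" for a using RE[OF that] R0 by blast
  have Ea1: "1 \<in> Ea a" if "a \<in> A" for a using RE[OF that] R1 by blast
  have Eaadd: "p + q \<in> Ea a" if "a \<in> A" "p \<in> Ea a" "q \<in> Ea a" for a p q
    using that Iadd[OF that(1)] unfolding Ea_def colon_def by (simp add: distrib_right)
  have Eamul: "p * q \<in> Ea a" if "a \<in> A" "p \<in> Ea a" "q \<in> Ea a" for a p q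
    using that unfolding Ea_def colon_def by (simp add: mult.assoc)
  have Eaneg: "- p \<in> Ea a" if "a \<in> A" "p \<in> Ea a" for a p
    using that Ineg[OF that(1)] unfolding Ea_def colon_def by simp
  define E where "E = family_sum A Ea"
  have E0: "0 \<in> E" unfolding E_def by (rule fs_zero)
  have Eadd: "u + v \<in> E" if "u \<in> E" "v \<in> E" for u v
    using that fs_add[of u A Ea v, OF _ _ Ea0 Eaadd] unfolding E_def by blast
  have EaE: "Ea a \<subseteq> E" if "a \<in> A" for a using fs_mem[OF that] unfolding E_def by blast
  obtain a0 where a0: "a0 \<in> A" using assms(7) by (metis finite.emptyI ex_in_conv)
  have RsE: "R \<subseteq> E" using RE[OF a0] EaE[OF a0] by blast
  have E1: "1 \<in> E" using RsE R1 by blast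
  have Eneg: "- u \<in> E" if "u \<in> E" for u
  proof -
    have "E \<subseteq> {u. - u \<in> E}" unfolding E_def
    proof (rule fs_induct)
      show "0 \<in> {u. - u \<in> family_sum A Ea}" using E0 E_def by simp
      show "p + q \<in> {u. - u \<in> family_sum A Ea}" if "p \<in> {u. - u \<in> family_sum A Ea}" "q \<in> {u. - u \<in> family_sum A Ea}" for p q
      proof -
        have "- p + - q \<in> E" using that Eadd[of "-p" "-q"] unfolding E_def mem_Collect_eq by blast
        then show ?thesis unfolding E_def mem_Collect_eq by (metis minus_add_distrib)
      qed
      show "Ea b \<subseteq> {u. - u \<in> family_sum A Ea}" if "b \<in> A" for b
        using Eaneg[OF that] EaE[OF that] unfolding E_def by blast
    qed
    then show ?thesis using that by blast
  qed
  have cross: "e * f \<in> E" if ab: "a \<in> A" "b \<in> A" "e \<in> Ea a" "f \<in> Ea b" for a b e f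
  proof (cases "a = b")
    case True then show ?thesis using ab Eamul EaE by blast
  next
    case False
    then obtain p q where pq: "p \<in> I a" "q \<in> I b" "p + q = 1" using comax ab(1,2) by blast
    have "e * f = f * (e * p) + e * (f * q)" using pq(3)
      by (metis (no_types, lifting) distrib_left mult.commute mult.left_commute mult_1_right)
    moreover have "f * (e * p) \<in> Ea b"
      using Eamul[OF ab(2) ab(4)] RE[OF ab(2)] IR[OF ab(1)] Ea_mem[OF ab(3) pq(1)] by blast
    moreover have "e * (f * q) \<in> Ea a"
      using Eamul[OF ab(1) ab(3)] RE[OF ab(1)] IR[OF ab(2)] Ea_mem[OF ab(4) pq(2)] by blast
    ultimately show ?thesis using Eadd EaE ab(1,2) by auto
  qed
  have Emul: "u * v \<in> E" if "u \<in> E" "v \<in> E" for u v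
  proof -
    have "E \<subseteq> {v. \<forall>u\<in>E. u * v \<in> E}" unfolding E_def
    proof (rule fs_induct)
      show "0 \<in> {v. \<forall>u\<in>family_sum A Ea. u * v \<in> family_sum A Ea}" using E0 E_def by simp
      show "p + q \<in> {v. \<forall>u\<in>family_sum A Ea. u * v \<in> family_sum A Ea}"
        if "p \<in> {v. \<forall>u\<in>family_sum A Ea. u * v \<in> family_sum A Ea}" "q \<in> {v. \<forall>u\<in>family_sum A Ea. u * v \<in> family_sum A Ea}" for p q
        using that Eadd unfolding E_def by (simp add: distrib_left)
      show "Ea b \<subseteq> {v. \<forall>u\<in>family_sum A Ea. u * v \<in> family_sum A Ea}" if "b \<in> A" for b
      proof
        fix f assume f: "f \<in> Ea b"
        have "E \<subseteq> {u. u * f \<in> E}" unfolding E_def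
          by (rule fs_induct) (use E0 Eadd cross that f in \<open>auto simp: E_def[symmetric] distrib_right\<close>)
        then show "f \<in> {v. \<forall>u\<in>family_sum A Ea. u * v \<in> family_sum A Ea}" unfolding E_def by blast
      qed
    qed
    then show ?thesis using that by blast
  qed
  have xE: "x * u \<in> R" if "u \<in> E" for u
  proof -
    have "E \<subseteq> {u. x * u \<in> R}" unfolding E_def
    proof (rule fs_induct)
      show "0 \<in> {u. x * u \<in> R}" using R0 by simp
      show "p + q \<in> {u. x * u \<in> R}" if "p \<in> {u. x * u \<in> R}" "q \<in> {u. x * u \<in> R}" for p q
        using that Radd by (simp add: distrib_left)
      show "Ea b \<subseteq> {u. x * u \<in> R}" if "b \<in> A" for b
        using Ea_mem Ix[OF that] IR[OF that] by (auto simp: mult.commute)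
    qed
    then show ?thesis using that by blast
  qed
  have sE: "subring E" unfolding subring_def by (simp add: E0 E1 Eadd Emul Eneg)
  have fo: "fractional_overring R E"
  proof -
    have "\<exists>d\<in>R. d \<noteq> 0 \<and> (\<forall>y\<in>E. d * y \<in> R)" using assms(5,6) xE by blast
    then show ?thesis unfolding fractional_overring_def overring_def using sE RsE by simp
  qed
  define J where "J = (\<lambda>a. fset_mult (I a) E)"
  have JE: "J a \<subseteq> E" if "a \<in> A" for a unfolding J_def
    by (rule fm_induct) (use E0 Eadd Emul IR[OF that] RsE in auto)
  have J0: "0 \<in> J a" for a unfolding J_def by (rule fm_zero)
  have Jadd: "u + v \<in> J a" if "u \<in> J a" "v \<in> J a" for a u v using that fm_add unfolding J_def by blast
  have Jprod: "i * e \<in> J a" if "i \<in> I a" "e \<in> E" for a i e using that fm_prod unfolding J_def by blast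
  have Jmul: "s * u \<in> J a" if "a \<in> A" "s \<in> E" "u \<in> J a" for a s u
  proof -
    have "J a \<subseteq> {u. \<forall>s\<in>E. s * u \<in> J a}" unfolding J_def
    proof (rule fm_induct)
      show "0 \<in> {u. \<forall>s\<in>E. s * u \<in> fset_mult (I a) E}" using J0 J_def by simp
      show "p + q \<in> {u. \<forall>s\<in>E. s * u \<in> fset_mult (I a) E}"
        if "p \<in> {u. \<forall>s\<in>E. s * u \<in> fset_mult (I a) E}" "q \<in> {u. \<forall>s\<in>E. s * u \<in> fset_mult (I a) E}" for p q
        using that Jadd unfolding J_def by (simp add: distrib_left)
      show "i * e \<in> {u. \<forall>s\<in>E. s * u \<in> fset_mult (I a) E}" if "i \<in> I a" "e \<in> E" for i e
      proof -
        have "s * (i * e) \<in> fset_mult (I a) E" if s: "s \<in> E" for s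
        proof -
          have eq: "s * (i * e) = i * (s * e)" by (simp add: algebra_simps)
          show ?thesis unfolding eq using Jprod[OF \<open>i \<in> I a\<close> Emul[OF s \<open>e \<in> E\<close>]] unfolding J_def by simp
        qed
        then show ?thesis by blast
      qed
    qed
    then show ?thesis using that by blast
  qed
  have Jx: "x \<in> J a" if "a \<in> A" for a using Jprod[OF Ix[OF that] E1] by simp
  have proper: "1 \<notin> J a" if aA: "a \<in> A" for a
  proof
    assume one: "1 \<in> J a"
    define T where "T = {y. \<exists>c\<in>R. c - 1 \<in> I a \<and> c * y \<in> Ea a}"
    have ET: "E \<subseteq> T" unfolding E_def
    proof (rule fs_induct)
      show "0 \<in> T" unfolding T_def using R1 I0[OF aA] Ea0[OF aA] by force
      show "u + v \<in> T" if "u \<in> T" "v \<in> T" for u v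
      proof -
        from that(1) T_def obtain c1 where c1: "c1 \<in> R" "c1 - 1 \<in> I a" "c1 * u \<in> Ea a" by blast
        from that(2) T_def obtain c2 where c2: "c2 \<in> R" "c2 - 1 \<in> I a" "c2 * v \<in> Ea a" by blast
        have eq1: "c1 * c2 - 1 = c1 * (c2 - 1) + (c1 - 1)" by (simp add: algebra_simps)
        have m1: "c1 * c2 - 1 \<in> I a" unfolding eq1 using Iadd[OF aA Imul[OF aA c1(1) c2(2)] c1(2)] .
        have eq2: "c1 * c2 * (u + v) = c2 * (c1 * u) + c1 * (c2 * v)" by (simp add: algebra_simps)
        have m2: "c1 * c2 * (u + v) \<in> Ea a" unfolding eq2
          using Eaadd[OF aA Eamul[OF aA _ c1(3)] Eamul[OF aA _ c2(3)]] RE[OF aA] c1(1) c2(1) by blast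
        show ?thesis unfolding T_def using Rmul[OF c1(1) c2(1)] m1 m2 by blast
      qed
      show "Ea b \<subseteq> T" if "b \<in> A" for b
      proof
        fix e assume e: "e \<in> Ea b"
        show "e \<in> T"
        proof (cases "b = a")
          case True then show ?thesis unfolding T_def using R1 I0[OF aA] e by force
        next
          case False
          then have ne: "a \<noteq> b" by simp
          from comax[OF aA that ne] obtain p q where pq: "p \<in> I a" "q \<in> I b" "p + q = 1" by blast
          have "q - 1 = - p" using pq(3) by (simp add: algebra_simps)
          then have m1: "q - 1 \<in> I a" using Ineg[OF aA pq(1)] by simp
          have "e * q \<in> I b" using Ea_mem[OF e pq(2)] .
          then have m2: "q * e \<in> Ea a" using IR[OF that] RE[OF aA] by (simp add: mult.commute subset_iff)
          have qR: "q \<in> R" using IR[OF that] pq(2) by blast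
          show ?thesis unfolding T_def using qR m1 m2 by blast
        qed
      qed
    qed
    define T' where "T' = {y. \<exists>c\<in>R. c - 1 \<in> I a \<and> c * y \<in> I a}"
    have JT: "J a \<subseteq> T'" unfolding J_def
    proof (rule fm_induct)
      show "0 \<in> T'" unfolding T'_def using R1 I0[OF aA] by force
      show "u + v \<in> T'" if "u \<in> T'" "v \<in> T'" for u v
      proof -
        from that(1) T'_def obtain c1 where c1: "c1 \<in> R" "c1 - 1 \<in> I a" "c1 * u \<in> I a" by blast
        from that(2) T'_def obtain c2 where c2: "c2 \<in> R" "c2 - 1 \<in> I a" "c2 * v \<in> I a" by blast
        have eq1: "c1 * c2 - 1 = c1 * (c2 - 1) + (c1 - 1)" by (simp add: algebra_simps)
        have m1: "c1 * c2 - 1 \<in> I a" unfolding eq1 using Iadd[OF aA Imul[OF aA c1(1) c2(2)] c1(2)] .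
        have eq2: "c1 * c2 * (u + v) = c2 * (c1 * u) + c1 * (c2 * v)" by (simp add: algebra_simps)
        have m2: "c1 * c2 * (u + v) \<in> I a" unfolding eq2
          using Iadd[OF aA Imul[OF aA c2(1) c1(3)] Imul[OF aA c1(1) c2(3)]] .
        show ?thesis unfolding T'_def using Rmul[OF c1(1) c2(1)] m1 m2 by blast
      qed
      show "i * e \<in> T'" if "i \<in> I a" "e \<in> E" for i e
      proof -
        from ET that(2) T_def obtain c where c: "c \<in> R" "c - 1 \<in> I a" "c * e \<in> Ea a" by blast
        have eq: "c * (i * e) = (c * e) * i" by (simp add: algebra_simps)
        have "c * (i * e) \<in> I a" unfolding eq using Ea_mem[OF c(3) that(1)] .
        then show ?thesis unfolding T'_def using c by blast
      qed
    qed
    obtain c where c: "c \<in> R" "c - 1 \<in> I a" "c * 1 \<in> I a" using JT one T'_def by blast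
    have "1 \<in> I a" using Iadd[OF aA c(3) Ineg[OF aA c(2)]] by simp
    then have "R \<subseteq> I a" using Imul[OF aA] by force
    then show False using INR[OF aA] IR[OF aA] by blast
  qed
  have JneE: "J a \<noteq> E" if "a \<in> A" for a using proper[OF that] E1 by blast
  have comaxJ: "comaximal E (J a) (J b)" if "a \<in> A" "b \<in> A" "a \<noteq> b" for a b
  proof -
    from comax that obtain p q where pq: "p \<in> I a" "q \<in> I b" "p + q = 1" by blast
    have S1: "E \<subseteq> {u + v |u v. u \<in> J a \<and> v \<in> J b}"
    proof
      fix e assume e: "e \<in> E"
      have eq: "p * e + q * e = e" using pq(3) by (metis distrib_right mult_1_left)
      have "p * e + q * e \<in> {u + v |u v. u \<in> J a \<and> v \<in> J b}"
        using Jprod[OF pq(1) e] Jprod[OF pq(2) e] by blast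
      with eq show "e \<in> {u + v |u v. u \<in> J a \<and> v \<in> J b}" by simp
    qed
    have S2: "{u + v |u v. u \<in> J a \<and> v \<in> J b} \<subseteq> E"
    proof
      fix z assume "z \<in> {u + v |u v. u \<in> J a \<and> v \<in> J b}"
      then obtain u v where "z = u + v" "u \<in> J a" "v \<in> J b" by blast
      then show "z \<in> E" using JE[OF that(1)] JE[OF that(2)] Eadd by blast
    qed
    show ?thesis unfolding comaximal_def by (rule subset_antisym[OF S2 S1])
  qed
  have inj: "inj_on J A"
  proof (rule inj_onI, rule ccontr)
    fix a b assume ab: "a \<in> A" "b \<in> A" "J a = J b" "a \<noteq> b"
    have S: "{u + v |u v. u \<in> J a \<and> v \<in> J b} = E"
      using comaxJ[OF ab(1,2,4)] unfolding comaximal_def .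
    have "E \<subseteq> J a"
    proof
      fix z assume "z \<in> E"
      then have "z \<in> {u + v |u v. u \<in> J a \<and> v \<in> J b}" using S by blast
      then obtain u v where "z = u + v" "u \<in> J a" "v \<in> J b" by blast
      then show "z \<in> J a" using Jadd ab(3) by simp
    qed
    then show False using JneE[OF ab(1)] JE[OF ab(1)] by blast
  qed
  have infJ: "infinite (J ` A)" using inj assms(7) finite_imageD by blast
  have inv: "invertible_ideal E (J a)" if aA: "a \<in> A" for a
  proof -
    have idJ: "is_ideal E (J a)" unfolding is_ideal_def by (simp add: JE[OF aA] J0 Jadd Jmul[OF aA])
    have ne0: "I a \<noteq> {0}" using Ix[OF aA] assms(6) by blast
    have fg: "fin_gen R (I a)" using assms(8)[OF aA] by blast
    have st: "stable_ideal R (I a)"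
      using assms(3) Iid[OF aA] ne0 fg unfolding finitely_stable_def by blast
    then have inv0: "fset_mult (I a) (colon (Ea a) (I a)) = Ea a"
      unfolding stable_ideal_def invertible_ideal_def Ea_def by blast
    have sub: "fset_mult (J a) (colon E (J a)) \<subseteq> E"
      by (rule fm_induct) (use E0 Eadd in \<open>auto simp: colon_def mult.commute\<close>)
    have key: "fset_mult (I a) (colon (Ea a) (I a)) \<subseteq> {z. \<forall>e\<in>E. z * e \<in> fset_mult (J a) (colon E (J a))}"
    proof (rule fm_induct)
      show "0 \<in> {z. \<forall>e\<in>E. z * e \<in> fset_mult (J a) (colon E (J a))}" using fm_zero[of "J a" "colon E (J a)"] by simp
      show "u + v \<in> {z. \<forall>e\<in>E. z * e \<in> fset_mult (J a) (colon E (J a))}"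
        if "u \<in> {z. \<forall>e\<in>E. z * e \<in> fset_mult (J a) (colon E (J a))}" "v \<in> {z. \<forall>e\<in>E. z * e \<in> fset_mult (J a) (colon E (J a))}" for u v
        using that by (auto simp: distrib_right intro!: fm_add)
      show "i * y \<in> {z. \<forall>e\<in>E. z * e \<in> fset_mult (J a) (colon E (J a))}" if i: "i \<in> I a" and y: "y \<in> colon (Ea a) (I a)" for i y
      proof (intro CollectI ballI)
        fix e assume e: "e \<in> E"
        have "J a \<subseteq> {j. y * e * j \<in> E}" unfolding J_def
        proof (rule fm_induct)
          show "0 \<in> {j. y * e * j \<in> E}" using E0 by simp
          show "p + q \<in> {j. y * e * j \<in> E}" if "p \<in> {j. y * e * j \<in> E}" "q \<in> {j. y * e * j \<in> E}" for p q
            using that Eadd by (simp add: distrib_left)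
          show "i' * f \<in> {j. y * e * j \<in> E}" if "i' \<in> I a" "f \<in> E" for i' f
          proof -
            have eq: "y * e * (i' * f) = (y * i') * (e * f)" by (simp add: algebra_simps)
            have "y * i' \<in> E" using y that(1) EaE[OF aA] unfolding colon_def by blast
            then show ?thesis unfolding mem_Collect_eq eq using Emul[OF _ Emul[OF e that(2)]] by blast
          qed
        qed
        then have "y * e \<in> colon E (J a)" unfolding colon_def by blast
        moreover have "i \<in> J a" using Jprod[OF i E1] by simp
        ultimately have "i * (y * e) \<in> fset_mult (J a) (colon E (J a))" by (rule fm_prod[rotated])
        then show "i * y * e \<in> fset_mult (J a) (colon E (J a))" by (simp only: mult.assoc)
      qed
    qed
    have "E \<subseteq> fset_mult (J a) (colon E (J a))"
    proof
      fix e assume "e \<in> E"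
      moreover have "1 \<in> fset_mult (I a) (colon (Ea a) (I a))" using inv0 Ea1[OF aA] by simp
      ultimately have "1 * e \<in> fset_mult (J a) (colon E (J a))" using key by blast
      then show "e \<in> fset_mult (J a) (colon E (J a))" by simp
    qed
    then show ?thesis unfolding invertible_ideal_def using idJ sub by blast
  qed
  have "fractional_overring R E \<and> infinite (J ` A)
    \<and> (\<forall>\<alpha>\<in>A. \<forall>\<beta>\<in>A. \<alpha> \<noteq> \<beta> \<longrightarrow> comaximal E (J \<alpha>) (J \<beta>))
    \<and> (\<forall>\<alpha>\<in>A. invertible_ideal E (J \<alpha>) \<and> J \<alpha> \<noteq> E \<and> x \<in> J \<alpha>)"
    using fo infJ comaxJ inv JneE Jx by simp
  then show ?thesis unfolding J_def E_def Ea_def .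
qed

end
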